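(* Consider the $1$-BHS problem in the model below, with agents having $O(\log n)$ bits of memory and nodes having whiteboards of $O(\log n)$ bits, where the agents may start from an arbitrary initial configuration (arbitrary placement on safe nodes). Then there exist instances in which $2\delta_{BH}$ agents cannot solve $1$-BHS, where $\delta_{BH}$ is the degree of the black hole in the footprint; i.e., it is impossible for $2\delta_{BH}$ agents to solve $1$-BHS in general.
   Context: A time-varying graph (TVG) is $\mathcal{G}=(V,E,\mathbb{T},\rho)$ with discrete rounds $\mathbb{T}=\mathbb{Z}^+$ and $\rho:E\times\mathbb{T}\to\{0,1\}$ indicating whether an edge is present in a round. Its footprint $G=(V,E)$ is an undirected, unweighted, connected graph with $n=|V|$ anonymous nodes (no IDs); the edges at a node $v$ of degree $\delta_v$ carry locally unique port numbers $0,\dots,\delta_v-1$ (no relation between the two ports of an edge). Each node has a whiteboard which visiting agents can read, write and erase. One node of $G$ is a black hole, which destroys any agent that enters it without leaving a trace; all other nodes are safe. In $1$-BHS, in each round an adversary may remove at most one edge of $G$, provided the graph remains connected in every round. There are $k$ mobile agents initially at safe nodes, with distinct IDs from $[1,n^c]$ for a constant $c>1$ unknown to them; each knows its own ID but has no knowledge of $k$, $n$, the maximum degree, $\delta_{BH}$, the black hole, or missing edges. Execution is synchronous; in each round each agent at a safe node performs Look (reads the whiteboard, sees co-located agents and their parameters, learns whether its move attempt in the previous round succeeded), Compute (decides a port to move through, may write on the whiteboard), Move (attempts to traverse the chosen port; it succeeds iff the edge is present in that round, otherwise the agent stays). An agent knows the degree of its current node and the port through which it entered, but cannot detect whether an incident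 edge is missing except by trying to traverse it. Agents traversing the same edge do not see each other. The $1$-BHS problem is solved if at least one agent survives, learns at least one edge (port) leading to the black hole, and terminates. *)

theory Defs
  imports Complex_Main
begin

type_synonym bits = "bool list"

text \<open>Decision of an agent in a round: stay, try to move through a port, or
  terminate declaring that the given port of the current node leads to the black hole.\<close>
datatype action = Stay | Go nat | Halt nat

record agent =
  pos :: nat
  mem :: bits
  inport :: "nat option"
  lastok :: bool             \<comment> \<open>whether the move attempt of the previous round succeeded\<close>
  alive :: bool              \<comment> \<open>False once destroyed by the black hole\<close>
  halted :: "nat option"     \<comment> \<open>Some p once terminated, reporting port p\<close>

text \<open>An algorithm (the same for all agents): given own ID, own memory, degree of the
  current node, entry port, success of last move, whiteboard content, and the list
  (ID, memory, terminated?) of the other agents at the node, it returns new memory,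
  new whiteboard content and an action.\<close>
type_synonym algo =
  "nat \<Rightarrow> bits \<Rightarrow> nat \<Rightarrow> nat option \<Rightarrow> bool \<Rightarrow> bits \<Rightarrow> (nat \<times> bits \<times> bool) list
     \<Rightarrow> bits \<times> bits \<times> action"

text \<open>Instance: footprint with nodes 0..<nn, degree dg, port map nb (nb v p is the
  neighbour of v through port p), black hole bh, k agents with IDs ids i and start
  nodes start i (i < k).\<close>
record bhs_inst =
  nn :: nat
  dg :: "nat \<Rightarrow> nat"
  nb :: "nat \<Rightarrow> nat \<Rightarrow> nat"
  bh :: nat
  k :: nat
  ids :: "nat \<Rightarrow> nat"
  start :: "nat \<Rightarrow> nat"

definition edges :: "bhs_inst \<Rightarrow> nat set set" where
  "edges I = {{v, nb I v p} | v p. v < nn I \<and> p < dg I v}"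

definition connected_on :: "nat \<Rightarrow> nat set set \<Rightarrow> bool" where
  "connected_on n F \<longleftrightarrow> (\<forall>u<n. \<forall>w<n. (u, w) \<in> {(x, y). {x, y} \<in> F}\<^sup>*)"

definition valid_graph :: "bhs_inst \<Rightarrow> bool" where
  "valid_graph I \<longleftrightarrow>
     (\<forall>v<nn I. \<forall>p<dg I v. nb I v p < nn I \<and> nb I v p \<noteq> v) \<and>
     (\<forall>v<nn I. inj_on (nb I v) {..<dg I v}) \<and>
     (\<forall>v<nn I. \<forall>p<dg I v. \<exists>q<dg I (nb I v p). nb I (nb I v p) q = v) \<and>
     connected_on (nn I) (edges I)"

definition valid_inst :: "real \<Rightarrow> bhs_inst \<Rightarrow> bool" where
  "valid_inst c I \<longleftrightarrow>
     valid_graph I \<and> bh I < nn I \<and> 1 \<le> k I \<and> inj_on (ids I) {..<k I} \<and>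
     (\<forall>i<k I. 1 \<le> ids I i \<and> real (ids I i) \<le> real (nn I) powr c \<and>
              start I i < nn I \<and> start I i \<noteq> bh I)"

text \<open>1-adversary: F t is the set of edges missing in round t.\<close>
definition adversary :: "bhs_inst \<Rightarrow> (nat \<Rightarrow> nat set set) \<Rightarrow> bool" where
  "adversary I F \<longleftrightarrow>
     (\<forall>t. F t \<subseteq> edges I \<and> card (F t) \<le> 1 \<and> connected_on (nn I) (edges I - F t))"

definition active :: "agent \<Rightarrow> bool" where
  "active a \<longleftrightarrow> alive a \<and> halted a = None"

text \<open>Agents at the same node access the whiteboard sequentially in increasing ID
  order (each sees the writes of the previous ones); all see the co-located agents as
  they were at the beginning of the round.\<close>
fun proc :: "algo \<Rightarrow> (nat \<Rightarrow> nat) \<Rightarrow> (nat \<Rightarrow> agent) \<Rightarrow> nat \<Rightarrow> nat list \<Rightarrow> nat list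
               \<Rightarrow> bits \<Rightarrow> (nat \<times> bits \<times> action) list \<times> bits" where
  "proc A idf ag d here [] w = ([], w)"
| "proc A idf ag d here (i # is) w =
     (case A (idf i) (mem (ag i)) d (inport (ag i)) (lastok (ag i)) w
            (map (\<lambda>j. (idf j, mem (ag j), halted (ag j) \<noteq> None)) (filter (\<lambda>j. j \<noteq> i) here)) of
        (s', w', a) \<Rightarrow>
          (case proc A idf ag d here is w' of (r, wfin) \<Rightarrow> ((i, s', a) # r, wfin)))"

definition local_round :: "algo \<Rightarrow> bhs_inst \<Rightarrow> (nat \<Rightarrow> agent) \<Rightarrow> (nat \<Rightarrow> bits) \<Rightarrow> nat
                              \<Rightarrow> (nat \<times> bits \<times> action) list \<times> bits" where
  "local_round A I ag wb v =
     proc A (ids I) ag (dg I v)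
       (sort_key (ids I) (filter (\<lambda>i. alive (ag i) \<and> pos (ag i) = v) [0..<k I]))
       (sort_key (ids I) (filter (\<lambda>i. active (ag i) \<and> pos (ag i) = v) [0..<k I]))
       (wb v)"

definition backport :: "bhs_inst \<Rightarrow> nat \<Rightarrow> nat \<Rightarrow> nat" where
  "backport I u v = (THE q. q < dg I u \<and> nb I u q = v)"

definition apply_action :: "bhs_inst \<Rightarrow> nat set set \<Rightarrow> agent \<Rightarrow> bits \<Rightarrow> action \<Rightarrow> agent" where
  "apply_action I M a s' act =
     (case act of
        Stay \<Rightarrow> a\<lparr>mem := s', lastok := True\<rparr>
      | Halt p \<Rightarrow> a\<lparr>mem := s', halted := Some p\<rparr>
      | Go p \<Rightarrow>
          (if p < dg I (pos a) \<and> {pos a, nb I (pos a) p} \<notin> M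
           then a\<lparr>mem := s', pos := nb I (pos a) p,
                  inport := Some (backport I (nb I (pos a) p) (pos a)),
                  lastok := True, alive := (nb I (pos a) p \<noteq> bh I)\<rparr>
           else a\<lparr>mem := s', lastok := False\<rparr>))"

definition step :: "algo \<Rightarrow> bhs_inst \<Rightarrow> nat set set \<Rightarrow> (nat \<Rightarrow> agent) \<times> (nat \<Rightarrow> bits)
                       \<Rightarrow> (nat \<Rightarrow> agent) \<times> (nat \<Rightarrow> bits)" where
  "step A I M cfg =
     (case cfg of (ag, wb) \<Rightarrow>
       ((\<lambda>i. if i < k I \<and> active (ag i) then
               (case map_of (fst (local_round A I ag wb (pos (ag i)))) i of
                  None \<Rightarrow> ag i
                | Some (s', act) \<Rightarrow> apply_action I M (ag i) s' act)
             else ag i),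
        (\<lambda>v. snd (local_round A I ag wb v))))"

definition init_cfg :: "bhs_inst \<Rightarrow> (nat \<Rightarrow> agent) \<times> (nat \<Rightarrow> bits)" where
  "init_cfg I =
     ((\<lambda>i. \<lparr>pos = start I i, mem = [], inport = None, lastok = True,
            alive = (i < k I), halted = None\<rparr>), (\<lambda>v. []))"

primrec run :: "algo \<Rightarrow> bhs_inst \<Rightarrow> (nat \<Rightarrow> nat set set) \<Rightarrow> nat
                  \<Rightarrow> (nat \<Rightarrow> agent) \<times> (nat \<Rightarrow> bits)" where
  "run A I F 0 = init_cfg I"
| "run A I F (Suc t) = step A I (F t) (run A I F t)"

definition logmem :: "real \<Rightarrow> algo \<Rightarrow> bool" where
  "logmem c A \<longleftrightarrow>
     (\<exists>C. \<forall>I F t. valid_inst c I \<and> adversary I F \<longrightarrow>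
        (\<forall>i<k I. real (length (mem (fst (run A I F t) i))) \<le> C * (log 2 (real (nn I)) + 1)) \<and>
        (\<forall>v<nn I. real (length (snd (run A I F t) v)) \<le> C * (log 2 (real (nn I)) + 1)))"

definition solved :: "algo \<Rightarrow> bhs_inst \<Rightarrow> (nat \<Rightarrow> nat set set) \<Rightarrow> bool" where
  "solved A I F \<longleftrightarrow>
     (\<exists>t i p. i < k I \<and> alive (fst (run A I F t) i) \<and> halted (fst (run A I F t) i) = Some p \<and>
        p < dg I (pos (fst (run A I F t) i)) \<and> nb I (pos (fst (run A I F t) i)) p = bh I)"

end

theory Submission
  imports Defs
begin


definition dgf :: "nat \<Rightarrow> nat" where
  "dgf v = (if v = 0 then 3 else if v = 3 then 1 else 2)"

definition nbp :: "nat \<Rightarrow> nat \<Rightarrow> nat \<Rightarrow> nat" where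
  "nbp p v j = (if v = 0 then (if j = p then 3 else if j < p then j + 1 else j)
               else if v = 1 then (if j = 0 then 0 else 2)
               else if v = 2 then (if j = 0 then 0 else 1) else 0)"

definition Ip :: "nat \<Rightarrow> bhs_inst" where
  "Ip p = (| nn = 4, dg = dgf, nb = nbp p, bh = 3, k = 2, ids = Suc, start = (\<lambda>_. 0) |)"

lemma Ip_simps[simp]: "nn (Ip p) = 4" "dg (Ip p) = dgf" "nb (Ip p) = nbp p" "bh (Ip p) = 3"
  "k (Ip p) = 2" "ids (Ip p) = Suc" "start (Ip p) = (\<lambda>_. 0)"
  by (simp_all add: Ip_def)

lemma lt4: "(v::nat) < 4 \<longleftrightarrow> v = 0 \<or> v = 1 \<or> v = 2 \<or> v = 3" by auto
lemma lt3: "(v::nat) < 3 \<longleftrightarrow> v = 0 \<or> v = 1 \<or> v = 2" by auto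
lemma lt2: "(v::nat) < 2 \<longleftrightarrow> v = 0 \<or> v = 1" by auto

lemma dgf_le: "dgf v \<le> 3" by (simp add: dgf_def)
lemma port3: "j < dgf v \<Longrightarrow> j = 0 \<or> j = 1 \<or> j = 2"
  by (cases "v = 0"; cases "v = 3"; simp add: dgf_def; arith)

definition E4 :: "nat set set" where "E4 = {{0,1},{0,2},{0,3},{1,2}}"
lemma E4_mem: "{0,1} \<in> E4" "{1,0} \<in> E4" "{0,2} \<in> E4" "{2,0} \<in> E4" "{0,3} \<in> E4" "{3,0} \<in> E4"
  "{1,2} \<in> E4" "{2,1} \<in> E4" "{Suc 0, 2} \<in> E4" "{2, Suc 0} \<in> E4" "{0, Suc 0} \<in> E4" "{Suc 0, 0} \<in> E4"
  unfolding E4_def by (simp_all add: insert_commute)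

lemma edges_Ip: assumes "p < 3" shows "edges (Ip p) = E4"
proof
  show "edges (Ip p) \<subseteq> E4"
  proof
    fix x assume "x \<in> edges (Ip p)"
    then obtain v j where x: "x = {v, nbp p v j}" and vj: "v < 4" "j < dgf v"
      unfolding edges_def by auto
    have "v = 0 \<or> v = 1 \<or> v = 2 \<or> v = 3" using vj by auto
    moreover have "p = 0 \<or> p = 1 \<or> p = 2" using assms by auto
    moreover have "j = 0 \<or> j = 1 \<or> j = 2" using vj(2) by (rule port3)
    ultimately show "x \<in> E4" using vj unfolding x
      apply (elim disjE) by (simp_all add: nbp_def dgf_def E4_def doubleton_eq_iff)
  qed
  show "E4 \<subseteq> edges (Ip p)"
  proof -
    have e: "{v, nbp p v j} \<in> edges (Ip p)" if "v < 4" "j < dgf v" for v j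
      unfolding edges_def by (rule CollectI, rule exI[of _ v], rule exI[of _ j]) (simp add: that)
    have "{1, nbp p 1 0} \<in> edges (Ip p)" by (rule e) (simp_all add: dgf_def)
    moreover have "{2, nbp p 2 0} \<in> edges (Ip p)" by (rule e) (simp_all add: dgf_def)
    moreover have "{1, nbp p 1 1} \<in> edges (Ip p)" by (rule e) (simp_all add: dgf_def)
    moreover have "{0, nbp p 0 p} \<in> edges (Ip p)" by (rule e) (simp_all add: dgf_def assms)
    moreover have "nbp p 1 0 = 0" "nbp p 2 0 = 0" "nbp p 1 1 = 2" "nbp p 0 p = 3" by (simp_all add: nbp_def)
    moreover have "{1,0} = {0,1::nat}" "{2,0} = {0,2::nat}" by auto
    ultimately have "{0,1} \<in> edges (Ip p)" "{0,2} \<in> edges (Ip p)" "{1,2} \<in> edges (Ip p)" "{0,3} \<in> edges (Ip p)"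
      by simp_all
    then show ?thesis unfolding E4_def by simp
  qed
qed

lemma conn4:
  assumes "{0,3} \<in> E"
    and "({0,1} \<in> E \<and> {0,2} \<in> E) \<or> ({0,1} \<in> E \<and> {1,2} \<in> E) \<or> ({0,2} \<in> E \<and> {1,2} \<in> E)"
  shows "connected_on 4 E"
proof -
  let ?R = "{(x, y). {x, y} \<in> E}"
  have symR: "(x,y) \<in> ?R \<Longrightarrow> (y,x) \<in> ?R" for x y by (simp add: insert_commute)
  have symst: "(x,y) \<in> ?R\<^sup>* \<Longrightarrow> (y,x) \<in> ?R\<^sup>*" for x y
  proof (induction rule: rtrancl_induct)
    case base then show ?case by simp
  next
    case (step y z) show ?case
      by (rule converse_rtrancl_into_rtrancl[OF symR[OF step(2)] step(3)])
  qed
  have r: "(x,y) \<in> ?R \<Longrightarrow> (x,y) \<in> ?R\<^sup>*" for x y by auto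
  have t: "(x,y) \<in> ?R\<^sup>* \<Longrightarrow> (y,z) \<in> ?R\<^sup>* \<Longrightarrow> (x,z) \<in> ?R\<^sup>*" for x y z by auto
  have h3: "(0,3) \<in> ?R\<^sup>*" using assms(1) r by auto
  have h1: "(0,1) \<in> ?R\<^sup>*" and h2: "(0,2) \<in> ?R\<^sup>*"
    using assms(2)
  proof -
    have a01: "{0,1} \<in> E \<Longrightarrow> (0,1) \<in> ?R\<^sup>*" by (rule r) simp
    have a02: "{0,2} \<in> E \<Longrightarrow> (0,2) \<in> ?R\<^sup>*" by (rule r) simp
    have a12: "{1,2} \<in> E \<Longrightarrow> (1,2) \<in> ?R\<^sup>*" by (rule r) simp
    show "(0,1) \<in> ?R\<^sup>*" using assms(2) a01 a02 a12 t symst by blast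
    show "(0,2) \<in> ?R\<^sup>*" using assms(2) a01 a02 a12 t symst by blast
  qed
  have h0: "(0,0) \<in> ?R\<^sup>*" by simp
  have hub: "u < 4 \<Longrightarrow> (0,u) \<in> ?R\<^sup>*" for u using h0 h1 h2 h3 by (auto simp: lt4)
  show ?thesis unfolding connected_on_def using hub symst t by blast
qed

lemma valid_graph_Ip: assumes "p < 3" shows "valid_graph (Ip p)"
proof -
  have pc: "p = 0 \<or> p = 1 \<or> p = 2" using assms by auto
  have a: "\<forall>v<nn (Ip p). \<forall>q<dg (Ip p) v. nb (Ip p) v q < nn (Ip p) \<and> nb (Ip p) v q \<noteq> v"
  proof (intro allI impI)
    fix v q assume vj: "v < nn (Ip p)" "q < dg (Ip p) v"
    have "v = 0 \<or> v = 1 \<or> v = 2 \<or> v = 3" using vj by auto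
    moreover have "q = 0 \<or> q = 1 \<or> q = 2" using vj(2) by (intro port3) simp
    ultimately show "nb (Ip p) v q < nn (Ip p) \<and> nb (Ip p) v q \<noteq> v" using vj pc
      apply (elim disjE) by (simp_all add: nbp_def dgf_def)
  qed
  have b: "\<forall>v<nn (Ip p). inj_on (nb (Ip p) v) {..<dg (Ip p) v}"
  proof (intro allI impI inj_onI)
    fix v q q' assume vj: "v < nn (Ip p)" "q \<in> {..<dg (Ip p) v}" "q' \<in> {..<dg (Ip p) v}"
      and eq: "nb (Ip p) v q = nb (Ip p) v q'"
    have "v = 0 \<or> v = 1 \<or> v = 2 \<or> v = 3" using vj by auto
    moreover have "q = 0 \<or> q = 1 \<or> q = 2" using vj(2) by (intro port3) simp
    moreover have "q' = 0 \<or> q' = 1 \<or> q' = 2" using vj(3) by (intro port3) simp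
    ultimately show "q = q'" using vj pc eq
      apply (elim disjE) by (simp_all add: nbp_def dgf_def)
  qed
  have c: "\<forall>v<nn (Ip p). \<forall>q<dg (Ip p) v. \<exists>r<dg (Ip p) (nb (Ip p) v q). nb (Ip p) (nb (Ip p) v q) r = v"
  proof (intro allI impI)
    fix v q assume "v < nn (Ip p)" "q < dg (Ip p) v"
    then show "\<exists>r<dg (Ip p) (nb (Ip p) v q). nb (Ip p) (nb (Ip p) v q) r = v"
    proof -
      have v: "v = 0 \<or> v = 1 \<or> v = 2 \<or> v = 3" using \<open>v < nn (Ip p)\<close> by auto
      have w1: "nbp p 0 (if p = 0 then 1 else 0) = 1" "(if p = 0 then 1 else 0) < (3::nat)"
        using assms by (auto simp: nbp_def)
      have w2: "nbp p 0 (if p = 2 then 1 else 2) = 2" "(if p = 2 then 1 else 2) < (3::nat)"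
        using assms by (auto simp: nbp_def lt3)
      have w3: "nbp p 0 p = 3" by (simp add: nbp_def)
      show ?thesis
      proof (cases "v = 0")
        case True
        then have "nbp p 0 q = 3 \<or> nbp p 0 q = 1 \<or> nbp p 0 q = 2"
          using \<open>q < dg (Ip p) v\<close> assms by (auto simp: nbp_def dgf_def lt3)
        moreover have "nbp p 1 0 = 0" "nbp p 2 0 = 0" "nbp p 3 0 = 0" by (simp_all add: nbp_def)
        moreover have "(0::nat) < dgf 1" "(0::nat) < dgf 2" "(0::nat) < dgf 3" by (simp_all add: dgf_def)
        ultimately show ?thesis using True by (simp only: Ip_simps) metis
      next
        case False
        then have "v = 1 \<or> v = 2 \<or> v = 3" using v by auto
        moreover have "q < dgf v" using \<open>q < dg (Ip p) v\<close> by simp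
        moreover have "nbp p 1 0 = 0" "nbp p 1 1 = 2" "nbp p 2 0 = 0" "nbp p 2 1 = 1" "nbp p 3 0 = 0"
          by (simp_all add: nbp_def)
        moreover have "dgf 1 = 2" "dgf 2 = 2" "dgf 3 = 1" "dgf 0 = 3" by (simp_all add: dgf_def)
        ultimately show ?thesis using w1 w2 w3 assms
          apply (simp only: Ip_simps)
          apply (elim disjE)
          subgoal by (cases "q = 0") (auto simp: lt2)
          subgoal by (cases "q = 0") (auto simp: lt2)
          subgoal by auto
          done
      qed
    qed
  qed
  have d: "connected_on (nn (Ip p)) (edges (Ip p))"
    using edges_Ip[OF assms] by (simp add: conn4 E4_def)
  show ?thesis unfolding valid_graph_def using a b c d by blast
qed




definition actof :: "algo \<Rightarrow> bhs_inst \<Rightarrow> (nat \<Rightarrow> agent) \<Rightarrow> (nat \<Rightarrow> bits) \<Rightarrow> nat \<Rightarrow> action" where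
  "actof A I ag wb i = (case map_of (fst (local_round A I ag wb (pos (ag i)))) i of
      None \<Rightarrow> Stay | Some sa \<Rightarrow> snd sa)"

definition blk1 :: "algo \<Rightarrow> bhs_inst \<Rightarrow> (nat \<Rightarrow> agent) \<Rightarrow> (nat \<Rightarrow> bits) \<Rightarrow> nat \<Rightarrow> nat set set" where
  "blk1 A I ag wb i = (if active (ag i) \<and> (pos (ag i) = 1 \<or> pos (ag i) = 2) then
      (case actof A I ag wb i of Go j \<Rightarrow> if j < 2 then {{pos (ag i), nb I (pos (ag i)) j}} else {}
        | _ \<Rightarrow> {}) else {})"

definition blk :: "algo \<Rightarrow> bhs_inst \<Rightarrow> (nat \<Rightarrow> agent) \<times> (nat \<Rightarrow> bits) \<Rightarrow> nat set set" where
  "blk A I cfg = (if blk1 A I (fst cfg) (snd cfg) 0 \<noteq> {} then blk1 A I (fst cfg) (snd cfg) 0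
                  else blk1 A I (fst cfg) (snd cfg) 1)"

primrec grun :: "algo \<Rightarrow> bhs_inst \<Rightarrow> nat \<Rightarrow> (nat \<Rightarrow> agent) \<times> (nat \<Rightarrow> bits)" where
  "grun A I 0 = init_cfg I"
| "grun A I (Suc t) = step A I (blk A I (grun A I t)) (grun A I t)"

definition Fg :: "algo \<Rightarrow> bhs_inst \<Rightarrow> nat \<Rightarrow> nat set set" where
  "Fg A I t = blk A I (grun A I t)"

lemma run_grun: "run A I (Fg A I) t = grun A I t"
  by (induct t) (simp_all add: Fg_def)

lemma blk1_shape:
  "blk1 A I ag wb i = {} \<or> (\<exists>x j. (x = 1 \<or> x = 2) \<and> j < 2 \<and> blk1 A I ag wb i = {{x, nb I x j}})"
  unfolding blk1_def by (auto split: action.splits)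

lemma blk_shape:
  "blk A I cfg = {} \<or> (\<exists>x j. (x = 1 \<or> x = 2) \<and> j < 2 \<and> blk A I cfg = {{x, nb I x j}})"
proof (cases "blk1 A I (fst cfg) (snd cfg) 0 = {}")
  case True
  then have "blk A I cfg = blk1 A I (fst cfg) (snd cfg) 1" by (simp add: blk_def)
  then show ?thesis using blk1_shape[of A I "fst cfg" "snd cfg" 1] by simp
next
  case False
  then have "blk A I cfg = blk1 A I (fst cfg) (snd cfg) 0" by (simp add: blk_def)
  then show ?thesis using blk1_shape[of A I "fst cfg" "snd cfg" 0] by simp
qed

lemma blk_E4: assumes "p < 3"
  shows "blk A (Ip p) cfg = {} \<or> blk A (Ip p) cfg = {{0,1}} \<or> blk A (Ip p) cfg = {{0,2}} \<or> blk A (Ip p) cfg = {{1,2}}"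
proof -
  from blk_shape[of A "Ip p" cfg] show ?thesis
  proof
    assume "\<exists>x j. (x = 1 \<or> x = 2) \<and> j < 2 \<and> blk A (Ip p) cfg = {{x, nb (Ip p) x j}}"
    then obtain x j where h: "x = 1 \<or> x = 2" "j < 2" "blk A (Ip p) cfg = {{x, nbp p x j}}" by auto
    have "j = 0 \<or> j = 1" using h(2) by auto
    moreover have "nbp p 1 0 = 0" "nbp p 1 1 = 2" "nbp p 2 0 = 0" "nbp p 2 1 = 1" by (simp_all add: nbp_def)
    moreover have "{1,0} = {0,1::nat}" "{2,0} = {0,2::nat}" "{2,1} = {1,2::nat}" by auto
    ultimately show ?thesis using h
      apply (elim disjE)
      by simp_all
  qed simp
qed

lemma blk_no03: "p < 3 \<Longrightarrow> {0,3} \<notin> blk A (Ip p) cfg"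
  apply (drule blk_E4[of p A cfg])
  apply (elim disjE)
  by (simp_all add: doubleton_eq_iff)

lemma adversary_Ip: assumes "p < 3" shows "adversary (Ip p) (Fg A (Ip p))"
  unfolding adversary_def
proof
  fix t
  let ?B = "Fg A (Ip p) t"
  have B: "?B = {} \<or> ?B = {{0,1}} \<or> ?B = {{0,2}} \<or> ?B = {{1,2}}"
    unfolding Fg_def using blk_E4[OF assms] by blast
  have E: "edges (Ip p) = E4" using edges_Ip[OF assms] .
  have sub: "?B \<subseteq> edges (Ip p)" using B unfolding E E4_def
    apply (elim disjE) by simp_all
  have card: "card ?B \<le> 1" using B apply (elim disjE) by simp_all
  have con: "connected_on (nn (Ip p)) (edges (Ip p) - ?B)"
    unfolding E Ip_simps using B
    apply (elim disjE)
    by (rule conn4; simp add: E4_def doubleton_eq_iff)+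
  show "?B \<subseteq> edges (Ip p) \<and> card ?B \<le> 1 \<and> connected_on (nn (Ip p)) (edges (Ip p) - ?B)"
    using sub card con by blast
qed

lemma valid_inst_Ip: assumes "p < 3" "c > 1" shows "valid_inst c (Ip p)"
proof -
  have "(4::real) powr 1 \<le> 4 powr c" using assms(2) by (intro powr_mono) auto
  then have h: "(4::real) \<le> 4 powr c" by simp
  have ids: "inj_on (ids (Ip p)) {..<k (Ip p)}" by simp
  have r: "\<forall>i<k (Ip p). 1 \<le> ids (Ip p) i \<and> real (ids (Ip p) i) \<le> real (nn (Ip p)) powr c \<and>
              start (Ip p) i < nn (Ip p) \<and> start (Ip p) i \<noteq> bh (Ip p)"
  proof (intro allI impI)
    fix i assume "i < k (Ip p)"
    then have "i = 0 \<or> i = 1" by auto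
    then show "1 \<le> ids (Ip p) i \<and> real (ids (Ip p) i) \<le> real (nn (Ip p)) powr c \<and>
              start (Ip p) i < nn (Ip p) \<and> start (Ip p) i \<noteq> bh (Ip p)"
      using h by auto
  qed
  show ?thesis unfolding valid_inst_def
    using valid_graph_Ip[OF assms(1)] ids r by simp
qed


lemma step_fst: "fst (step A I M cfg) i =
  (if i < k I \<and> active (fst cfg i) then
     (case map_of (fst (local_round A I (fst cfg) (snd cfg) (pos (fst cfg i)))) i of
        None \<Rightarrow> fst cfg i
      | Some (s', act) \<Rightarrow> apply_action I M (fst cfg i) s' act)
   else fst cfg i)"
proof -
  obtain ag wb where c: "cfg = (ag, wb)" by (cases cfg)
  show ?thesis unfolding c by (simp add: step_def split: option.split)
qed

lemma step_snd: "snd (step A I M cfg) v = snd (local_round A I (fst cfg) (snd cfg) v)"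
proof -
  obtain ag wb where c: "cfg = (ag, wb)" by (cases cfg)
  show ?thesis unfolding c by (simp add: step_def)
qed

lemma step_else: "\<not> (i < k I \<and> active (fst cfg i)) \<Longrightarrow> fst (step A I M cfg) i = fst cfg i"
  unfolding step_fst by (rule if_not_P)

lemma step_inactive: "\<not> active (fst cfg i) \<Longrightarrow> fst (step A I M cfg) i = fst cfg i"
  by (rule step_else) simp

lemma map_actof: "map_of (fst (local_round A I ag wb (pos (ag i)))) i = Some (s, act) \<Longrightarrow>
    actof A I ag wb i = act"
  by (simp add: actof_def)

lemma actof_Go: "actof A I ag wb i = Go j \<Longrightarrow>
    \<exists>s. map_of (fst (local_round A I ag wb (pos (ag i)))) i = Some (s, Go j)"
  by (auto simp: actof_def split: option.splits)

lemma apply_action_cong: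
  assumes "dg I1 (pos a) = dg I2 (pos a)" "\<forall>j. act = Go j \<longrightarrow> \<not> j < dg I1 (pos a)"
  shows "apply_action I1 M1 a s act = apply_action I2 M2 a s act"
  using assms by (cases act) (auto simp: apply_action_def)

lemma apply_action_nomove:
  assumes "\<forall>j. act = Go j \<longrightarrow> \<not> (j < dg I (pos a) \<and> {pos a, nb I (pos a) j} \<notin> M)"
  shows "pos (apply_action I M a s act) = pos a \<and> alive (apply_action I M a s act) = alive a"
  using assms by (cases act) (auto simp: apply_action_def)

lemma apply_action_move:
  assumes "j < dg I (pos a)" "{pos a, nb I (pos a) j} \<notin> M"
  shows "pos (apply_action I M a s (Go j)) = nb I (pos a) j \<and>
         alive (apply_action I M a s (Go j)) = (nb I (pos a) j \<noteq> bh I)"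
  using assms by (auto simp: apply_action_def)

lemma step_stay:
  assumes "\<not> (\<exists>j. actof A I (fst cfg) (snd cfg) i = Go j \<and> j < dg I (pos (fst cfg i)) \<and>
                    {pos (fst cfg i), nb I (pos (fst cfg i)) j} \<notin> M)"
  shows "pos (fst (step A I M cfg) i) = pos (fst cfg i) \<and> alive (fst (step A I M cfg) i) = alive (fst cfg i)"
proof (cases "i < k I \<and> active (fst cfg i)")
  case False then show ?thesis by (simp add: step_else)
next
  case True
  show ?thesis
  proof (cases "map_of (fst (local_round A I (fst cfg) (snd cfg) (pos (fst cfg i)))) i")
    case None then show ?thesis using True by (simp add: step_fst)
  next
    case (Some sa)
    obtain s' act where sa: "sa = (s', act)" by (cases sa)
    have "actof A I (fst cfg) (snd cfg) i = act" using Some sa by (simp add: map_actof)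
    then have "\<forall>j. act = Go j \<longrightarrow> \<not> (j < dg I (pos (fst cfg i)) \<and> {pos (fst cfg i), nb I (pos (fst cfg i)) j} \<notin> M)"
      using assms by blast
    then show ?thesis using True Some sa apply_action_nomove by (simp add: step_fst)
  qed
qed

lemma step_go:
  assumes "i < k I" "active (fst cfg i)" "actof A I (fst cfg) (snd cfg) i = Go j"
    "j < dg I (pos (fst cfg i))" "{pos (fst cfg i), nb I (pos (fst cfg i)) j} \<notin> M"
  shows "pos (fst (step A I M cfg) i) = nb I (pos (fst cfg i)) j \<and>
         alive (fst (step A I M cfg) i) = (nb I (pos (fst cfg i)) j \<noteq> bh I)"
proof -
  obtain s where s: "map_of (fst (local_round A I (fst cfg) (snd cfg) (pos (fst cfg i)))) i = Some (s, Go j)"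
    using actof_Go[OF assms(3)] by blast
  then show ?thesis using assms apply_action_move[OF assms(4,5)] by (simp add: step_fst)
qed

section \<open>Persistence\<close>

lemma dead_persist1: "\<not> alive (fst (grun A I t) i) \<Longrightarrow> \<not> alive (fst (grun A I (Suc t)) i)"
  by (simp add: step_inactive active_def)

lemma dead_persist: "\<not> alive (fst (grun A I t) i) \<Longrightarrow> \<not> alive (fst (grun A I (t + d)) i)"
  by (induct d) (simp_all add: step_inactive active_def)

lemma halted_persist: "halted (fst (grun A I t) i) = Some r \<Longrightarrow> halted (fst (grun A I (t + d)) i) = Some r"
  by (induct d) (simp_all add: step_inactive active_def)

lemma halted_uniq:
  assumes "halted (fst (grun A I t) i) = Some r" "halted (fst (grun A I t') i) = Some r'"
  shows "r = r'"
proof -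
  have "halted (fst (grun A I (t + t')) i) = Some r" using halted_persist[OF assms(1)] .
  moreover have "halted (fst (grun A I (t' + t)) i) = Some r'" using halted_persist[OF assms(2)] .
  ultimately show ?thesis by (simp add: add.commute)
qed

lemma active_before: "active (fst (grun A I t) i) \<Longrightarrow> s \<le> t \<Longrightarrow> halted (fst (grun A I s) i) = None"
proof (rule ccontr)
  assume a: "active (fst (grun A I t) i)" "s \<le> t" "halted (fst (grun A I s) i) \<noteq> None"
  then obtain r where "halted (fst (grun A I s) i) = Some r" by auto
  from halted_persist[OF this, of "t - s"] a(2) have "halted (fst (grun A I t) i) = Some r" by simp
  with a(1) show False by (simp add: active_def)
qed

lemma never_solved_agent:
  assumes "active (fst (grun A I T) i)" "\<not> alive (fst (grun A I (Suc T)) i)"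
  shows "\<not> (alive (fst (grun A I s) i) \<and> halted (fst (grun A I s) i) \<noteq> None)"
proof (cases "s \<le> T")
  case True then show ?thesis using active_before[OF assms(1)] by simp
next
  case False
  then have "s = Suc T + (s - Suc T)" by simp
  then show ?thesis using dead_persist[OF assms(2), of "s - Suc T"] by metis
qed


section \<open>Local round congruence\<close>

lemma proc_cong:
  assumes "\<forall>i\<in>set here. ag1 i = ag2 i" "set xs \<subseteq> set here"
  shows "proc A idf ag1 d here xs w = proc A idf ag2 d here xs w"
  using assms(2)
proof (induction xs arbitrary: w)
  case Nil then show ?case by simp
next
  case (Cons i xs)
  have i: "ag1 i = ag2 i" using Cons.prems assms(1) by auto
  have m: "map (\<lambda>j. (idf j, mem (ag1 j), halted (ag1 j) \<noteq> None)) (filter (\<lambda>j. j \<noteq> i) here) =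
           map (\<lambda>j. (idf j, mem (ag2 j), halted (ag2 j) \<noteq> None)) (filter (\<lambda>j. j \<noteq> i) here)"
    by (rule map_cong) (use assms(1) in auto)
  have ih: "\<And>w. proc A idf ag1 d here xs w = proc A idf ag2 d here xs w"
    using Cons.IH Cons.prems by auto
  show ?case by (simp only: proc.simps i m ih)
qed

lemma lr_cong:
  assumes "ids I1 = ids I2" "k I1 = k I2" "dg I1 v = dg I2 v"
    and "\<forall>i<k I1. (alive (ag1 i) \<and> pos (ag1 i) = v) = (alive (ag2 i) \<and> pos (ag2 i) = v)"
    and "\<forall>i<k I1. alive (ag1 i) \<and> pos (ag1 i) = v \<longrightarrow> ag1 i = ag2 i"
    and "wb1 v = wb2 v"
  shows "local_round A I1 ag1 wb1 v = local_round A I2 ag2 wb2 v"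
proof -
  have A4: "\<And>i. i < k I1 \<Longrightarrow> (alive (ag1 i) \<and> pos (ag1 i) = v) = (alive (ag2 i) \<and> pos (ag2 i) = v)"
    using assms(4) by blast
  have A5: "\<And>i. i < k I1 \<Longrightarrow> alive (ag1 i) \<and> pos (ag1 i) = v \<Longrightarrow> ag1 i = ag2 i"
    using assms(5) by blast
  have f1: "filter (\<lambda>i. alive (ag1 i) \<and> pos (ag1 i) = v) [0..<k I1] =
            filter (\<lambda>i. alive (ag2 i) \<and> pos (ag2 i) = v) [0..<k I1]"
  proof (rule filter_cong[OF refl])
    fix i assume "i \<in> set [0..<k I1]"
    then have "i < k I1" by simp
    then show "(alive (ag1 i) \<and> pos (ag1 i) = v) = (alive (ag2 i) \<and> pos (ag2 i) = v)" by (rule A4)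
  qed
  have f2: "filter (\<lambda>i. active (ag1 i) \<and> pos (ag1 i) = v) [0..<k I1] =
            filter (\<lambda>i. active (ag2 i) \<and> pos (ag2 i) = v) [0..<k I1]"
  proof (rule filter_cong[OF refl])
    fix i assume "i \<in> set [0..<k I1]"
    then have ik: "i < k I1" by simp
    show "(active (ag1 i) \<and> pos (ag1 i) = v) = (active (ag2 i) \<and> pos (ag2 i) = v)"
    proof (cases "alive (ag1 i) \<and> pos (ag1 i) = v")
      case True then show ?thesis using A5[OF ik] by simp
    next
      case False
      then have "\<not> (alive (ag2 i) \<and> pos (ag2 i) = v)" using A4[OF ik] by simp
      then show ?thesis using False unfolding active_def by blast
    qed
  qed
  let ?here = "sort_key (ids I1) (filter (\<lambda>i. alive (ag1 i) \<and> pos (ag1 i) = v) [0..<k I1])"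
  let ?act = "sort_key (ids I1) (filter (\<lambda>i. active (ag1 i) \<and> pos (ag1 i) = v) [0..<k I1])"
  have h: "\<forall>i\<in>set ?here. ag1 i = ag2 i"
  proof
    fix i assume "i \<in> set ?here"
    then have "i < k I1" "alive (ag1 i) \<and> pos (ag1 i) = v" by simp_all
    then show "ag1 i = ag2 i" by (rule A5)
  qed
  have s: "set ?act \<subseteq> set ?here" unfolding active_def by auto
  have "proc A (ids I1) ag1 (dg I1 v) ?here ?act (wb1 v) = proc A (ids I1) ag2 (dg I1 v) ?here ?act (wb1 v)"
    by (rule proc_cong[OF h s])
  moreover have "local_round A I2 ag2 wb2 v = proc A (ids I1) ag2 (dg I1 v) ?here ?act (wb1 v)"
    apply (unfold local_round_def)
    apply (unfold f1 f2)
    apply (unfold assms(1,2,3,6))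
    by (rule refl)
  moreover have "local_round A I1 ag1 wb1 v = proc A (ids I1) ag1 (dg I1 v) ?here ?act (wb1 v)"
    unfolding local_round_def by (rule refl)
  ultimately show ?thesis by simp
qed

lemma lr_indep: "local_round A (Ip p) ag wb v = local_round A (Ip q) ag wb v"
  by (simp add: local_round_def)

lemma actof_indep: "actof A (Ip p) ag wb i = actof A (Ip q) ag wb i"
  by (simp add: actof_def local_round_def)


lemma nbp_bh: assumes "p < 3" "j < dgf w" "nbp p w j = 3" shows "w = 0 \<and> j = p"
proof (cases "w = 0")
  case True
  then have "j < 3" using assms(2) by (simp add: dgf_def)
  then show ?thesis using True assms(1,3) by (auto simp: nbp_def split: if_splits)
next
  case False
  then show ?thesis using assms(3) by (auto simp: nbp_def split: if_splits)
qed

lemma nbp_self: "nbp p 0 p = 3" by (simp add: nbp_def)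

lemma nbp_tri: assumes "p < 3" "q < 3" "p \<noteq> q" shows "nbp q 0 p = 1 \<or> nbp q 0 p = 2"
  using assms by (auto simp: nbp_def)

lemma dgf0: "dgf 0 = 3" and dgf12: "x = 1 \<or> x = 2 \<Longrightarrow> dgf x = 2"
  by (auto simp: dgf_def)

lemma solved_char:
  assumes "p < 3" "solved A (Ip p) (Fg A (Ip p))"
  shows "\<exists>t i. i < 2 \<and> alive (fst (grun A (Ip p) t) i) \<and> pos (fst (grun A (Ip p) t) i) = 0 \<and>
           halted (fst (grun A (Ip p) t) i) = Some p"
proof -
  obtain t i p' where h: "i < 2" "alive (fst (grun A (Ip p) t) i)" "halted (fst (grun A (Ip p) t) i) = Some p'"
    "p' < dgf (pos (fst (grun A (Ip p) t) i))" "nbp p (pos (fst (grun A (Ip p) t) i)) p' = 3"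
    using assms(2) unfolding solved_def run_grun by auto
  from nbp_bh[OF assms(1) h(4,5)] h show ?thesis by blast
qed

definition home :: "(nat \<Rightarrow> agent) \<times> (nat \<Rightarrow> bits) \<Rightarrow> bool" where
  "home cfg \<longleftrightarrow> (\<forall>i<2. pos (fst cfg i) = 0 \<and> alive (fst cfg i))"

definition NG :: "algo \<Rightarrow> (nat \<Rightarrow> agent) \<times> (nat \<Rightarrow> bits) \<Rightarrow> bool" where
  "NG A cfg \<longleftrightarrow> (\<forall>i<2. active (fst cfg i) \<longrightarrow> (\<forall>j<3. actof A (Ip 0) (fst cfg) (snd cfg) i \<noteq> Go j))"

lemma blk_home: assumes "home cfg" shows "blk A I cfg = {}"
proof -
  have "pos (fst cfg 0) = 0" "pos (fst cfg 1) = 0" using assms by (auto simp: home_def)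
  then show ?thesis by (simp add: blk_def blk1_def)
qed

lemma agent_sync:
  assumes "i < 2" "fst cfg1 i = fst cfg2 i" "pos (fst cfg1 i) = 0"
    "local_round A (Ip p) (fst cfg1) (snd cfg1) 0 = local_round A (Ip q) (fst cfg2) (snd cfg2) 0"
    "active (fst cfg1 i) \<longrightarrow> (\<forall>j<3. actof A (Ip p) (fst cfg1) (snd cfg1) i \<noteq> Go j)"
  shows "fst (step A (Ip p) M1 cfg1) i = fst (step A (Ip q) M2 cfg2) i \<and>
         pos (fst (step A (Ip p) M1 cfg1) i) = 0 \<and> alive (fst (step A (Ip p) M1 cfg1) i) = alive (fst cfg1 i)"
proof (cases "active (fst cfg1 i)")
  case False
  then have "\<not> active (fst cfg2 i)" using assms(2) by simp
  then show ?thesis using False assms(2,3) by (simp add: step_inactive)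
next
  case True
  have a2: "active (fst cfg2 i)" using True assms(2) by simp
  have lr: "map_of (fst (local_round A (Ip q) (fst cfg2) (snd cfg2) (pos (fst cfg2 i)))) i =
            map_of (fst (local_round A (Ip p) (fst cfg1) (snd cfg1) (pos (fst cfg1 i)))) i"
    using assms(2,3,4) by simp
  show ?thesis
  proof (cases "map_of (fst (local_round A (Ip p) (fst cfg1) (snd cfg1) (pos (fst cfg1 i)))) i")
    case None
    then show ?thesis using True a2 lr assms(1,2,3) by (simp add: step_fst)
  next
    case (Some sa)
    obtain s' act where sa: "sa = (s', act)" by (cases sa)
    have "actof A (Ip p) (fst cfg1) (snd cfg1) i = act" using Some sa by (simp add: map_actof)
    then have nm: "\<forall>j. act = Go j \<longrightarrow> \<not> j < dg (Ip p) (pos (fst cfg1 i))"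
      using assms(3,5) True by (auto simp: dgf0)
    have eq: "apply_action (Ip p) M1 (fst cfg1 i) s' act = apply_action (Ip q) M2 (fst cfg1 i) s' act"
      by (rule apply_action_cong) (use nm in simp_all)
    have nm2: "\<forall>j. act = Go j \<longrightarrow> \<not> (j < dg (Ip p) (pos (fst cfg1 i)) \<and>
          {pos (fst cfg1 i), nb (Ip p) (pos (fst cfg1 i)) j} \<notin> M1)" using nm by blast
    have st: "fst (step A (Ip p) M1 cfg1) i = apply_action (Ip p) M1 (fst cfg1 i) s' act"
      using True Some sa assms(1) by (simp add: step_fst)
    have st2: "fst (step A (Ip q) M2 cfg2) i = apply_action (Ip q) M2 (fst cfg1 i) s' act"
      using a2 Some sa assms(1,2) lr by (simp add: step_fst)
    show ?thesis using st st2 eq apply_action_nomove[OF nm2, of s'] assms(3) by simp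
  qed
qed

lemma phase1_step:
  assumes "home cfg" "NG A cfg"
  shows "step A (Ip p) M cfg = step A (Ip 0) M' cfg \<and> home (step A (Ip p) M cfg)"
proof -
  have ag: "fst (step A (Ip p) M cfg) i = fst (step A (Ip 0) M' cfg) i \<and>
        (i < 2 \<longrightarrow> pos (fst (step A (Ip p) M cfg) i) = 0 \<and> alive (fst (step A (Ip p) M cfg) i))" for i
  proof (cases "i < 2")
    case True
    have "active (fst cfg i) \<longrightarrow> (\<forall>j<3. actof A (Ip p) (fst cfg) (snd cfg) i \<noteq> Go j)"
      using assms(2) True unfolding NG_def by (simp add: actof_indep[of A p _ _ _ 0])
    moreover have "pos (fst cfg i) = 0" "alive (fst cfg i)" using assms(1) True by (auto simp: home_def)
    ultimately have X: "fst (step A (Ip p) M cfg) i = fst (step A (Ip 0) M' cfg) i \<and>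
         pos (fst (step A (Ip p) M cfg) i) = 0 \<and> alive (fst (step A (Ip p) M cfg) i) = alive (fst cfg i)"
      using agent_sync[of i cfg cfg A p 0 M M'] True lr_indep[of A p _ _ _ 0] by blast
    show ?thesis using X \<open>alive (fst cfg i)\<close> by blast
  next
    case False
    then show ?thesis by (simp add: step_else)
  qed
  have "fst (step A (Ip p) M cfg) = fst (step A (Ip 0) M' cfg)" using ag by auto
  moreover have "snd (step A (Ip p) M cfg) = snd (step A (Ip 0) M' cfg)"
    by (auto simp: step_snd lr_indep[of A p _ _ _ 0])
  ultimately have "step A (Ip p) M cfg = step A (Ip 0) M' cfg" by (rule prod_eqI)
  moreover have "home (step A (Ip p) M cfg)" unfolding home_def using ag by blast
  ultimately show ?thesis by simp
qed

lemma phase1: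
  "(\<forall>s<t. NG A (grun A (Ip 0) s)) \<Longrightarrow> grun A (Ip p) t = grun A (Ip 0) t \<and> home (grun A (Ip 0) t)"
proof (induction t)
  case 0
  show ?case by (simp add: init_cfg_def home_def)
next
  case (Suc t)
  then have ih: "grun A (Ip p) t = grun A (Ip 0) t" "home (grun A (Ip 0) t)" and ng: "NG A (grun A (Ip 0) t)"
    by auto
  have "grun A (Ip p) (Suc t) = step A (Ip p) (blk A (Ip p) (grun A (Ip 0) t)) (grun A (Ip 0) t)"
    using ih by simp
  also have "\<dots> = grun A (Ip 0) (Suc t)"
    using phase1_step[OF ih(2) ng] by simp
  finally show ?case using phase1_step[OF ih(2) ng, of 0] by simp
qed

lemma ghost_step:
  assumes "a < 2" "b < 2" "a \<noteq> b" "alive (fst cfg a)" "pos (fst cfg a) = x" "x = 1 \<or> x = 2"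
    "\<not> (active (fst cfg b) \<and> (pos (fst cfg b) = 1 \<or> pos (fst cfg b) = 2))"
  shows "alive (fst (step A (Ip p) (blk A (Ip p) cfg) cfg) a) \<and>
         pos (fst (step A (Ip p) (blk A (Ip p) cfg) cfg) a) = x"
proof (cases "active (fst cfg a)")
  case False then show ?thesis using assms by (simp add: step_inactive)
next
  case True
  have "\<not> (\<exists>j. actof A (Ip p) (fst cfg) (snd cfg) a = Go j \<and> j < dg (Ip p) (pos (fst cfg a)) \<and>
                    {pos (fst cfg a), nb (Ip p) (pos (fst cfg a)) j} \<notin> blk A (Ip p) cfg)"
  proof
    assume "\<exists>j. actof A (Ip p) (fst cfg) (snd cfg) a = Go j \<and> j < dg (Ip p) (pos (fst cfg a)) \<and>
                    {pos (fst cfg a), nb (Ip p) (pos (fst cfg a)) j} \<notin> blk A (Ip p) cfg"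
    then obtain j where j: "actof A (Ip p) (fst cfg) (snd cfg) a = Go j" "j < 2"
      "{x, nbp p x j} \<notin> blk A (Ip p) cfg"
      using assms(5,6) dgf12 by auto
    have b1: "blk1 A (Ip p) (fst cfg) (snd cfg) a = {{x, nbp p x j}}"
      using True j(1,2) assms(5,6) unfolding blk1_def by auto
    have "blk A (Ip p) cfg = {{x, nbp p x j}}"
    proof (cases "a = 0")
      case True
      then show ?thesis using b1 by (simp add: blk_def)
    next
      case False
      then have "a = 1" "b = 0" using assms(1,2,3) by auto
      moreover have "blk1 A (Ip p) (fst cfg) (snd cfg) b = {}"
        using assms(7) unfolding blk1_def by auto
      ultimately show ?thesis using b1 by (simp add: blk_def)
    qed
    then show False using j(3) by simp
  qed
  then show ?thesis using step_stay assms(4,5) by metis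
qed

lemma ghost_forever:
  assumes "a < 2" "b < 2" "a \<noteq> b" "alive (fst (grun A (Ip p) T) a)" "pos (fst (grun A (Ip p) T) a) = x"
    "x = 1 \<or> x = 2"
    "\<forall>s\<ge>T. \<not> (active (fst (grun A (Ip p) s) b) \<and> (pos (fst (grun A (Ip p) s) b) = 1 \<or> pos (fst (grun A (Ip p) s) b) = 2))"
  shows "alive (fst (grun A (Ip p) (T + d)) a) \<and> pos (fst (grun A (Ip p) (T + d)) a) = x"
proof (induction d)
  case 0 then show ?case using assms(4,5) by simp
next
  case (Suc d)
  have "\<not> (active (fst (grun A (Ip p) (T + d)) b) \<and> (pos (fst (grun A (Ip p) (T + d)) b) = 1 \<or> pos (fst (grun A (Ip p) (T + d)) b) = 2))"
    using assms(7) by simp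
  then show ?case using ghost_step[OF assms(1,2,3) _ _ assms(6), of "grun A (Ip p) (T + d)" A p] Suc.IH by simp
qed


lemma move_first:
  assumes "home C" "grun A (Ip r) t1 = C" "i < 2" "active (fst C i)"
    "actof A (Ip 0) (fst C) (snd C) i = Go j" "j < 3"
  shows "pos (fst (grun A (Ip r) (Suc t1)) i) = nbp r 0 j \<and>
         alive (fst (grun A (Ip r) (Suc t1)) i) = (nbp r 0 j \<noteq> 3)"
proof -
  have g: "grun A (Ip r) (Suc t1) = step A (Ip r) {} C" using assms(2) blk_home[OF assms(1)] by simp
  have p0: "pos (fst C i) = 0" using assms(1,3) by (simp add: home_def)
  have ac: "actof A (Ip r) (fst C) (snd C) i = Go j" using assms(5) actof_indep[of A r _ _ _ 0] by simp
  show ?thesis unfolding g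
    using step_go[of i "Ip r" C A j "{}"] assms(3,4,6) ac p0 by (simp add: dgf0)
qed

lemma not_solved_by:
  assumes "r < 3" "\<And>t i. i < 2 \<Longrightarrow> alive (fst (grun A (Ip r) t) i) \<Longrightarrow> pos (fst (grun A (Ip r) t) i) = 0 \<Longrightarrow>
             halted (fst (grun A (Ip r) t) i) = Some r \<Longrightarrow> False"
  shows "\<not> solved A (Ip r) (Fg A (Ip r))"
  using solved_char[OF assms(1)] assms(2) by blast

lemma caseA:
  assumes "\<forall>s. NG A (grun A (Ip 0) s)"
  shows "\<exists>r<3. \<not> solved A (Ip r) (Fg A (Ip r))"
proof (rule ccontr)
  assume "\<not> (\<exists>r<3. \<not> solved A (Ip r) (Fg A (Ip r)))"
  then have S: "\<And>r. r < 3 \<Longrightarrow> solved A (Ip r) (Fg A (Ip r))" by blast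
  have eq: "\<And>r t. grun A (Ip r) t = grun A (Ip 0) t" using phase1 assms by blast
  have h: "\<exists>t i. i < 2 \<and> halted (fst (grun A (Ip 0) t) i) = Some r" if "r < 3" for r
    using solved_char[OF that S[OF that]] eq[of r] by metis
  obtain t0 i0 where 0: "i0 < 2" "halted (fst (grun A (Ip 0) t0) i0) = Some 0" using h[of 0] by auto
  obtain t1 i1 where 1: "i1 < 2" "halted (fst (grun A (Ip 0) t1) i1) = Some 1" using h[of 1] by auto
  obtain t2 i2 where 2: "i2 < 2" "halted (fst (grun A (Ip 0) t2) i2) = Some 2" using h[of 2] by auto
  have "i0 = i1 \<or> i0 = i2 \<or> i1 = i2" using 0(1) 1(1) 2(1) by auto
  then show False
  proof (elim disjE)
    assume "i0 = i1" then show False using halted_uniq[OF 0(2)] 1(2) by fastforce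
  next
    assume "i0 = i2" then show False using halted_uniq[OF 0(2)] 2(2) by fastforce
  next
    assume "i1 = i2" then show False using halted_uniq[OF 1(2)] 2(2) by fastforce
  qed
qed

lemma caseB12:
  assumes early: "\<And>r t. t \<le> t1 \<Longrightarrow> grun A (Ip r) t = grun A (Ip 0) t" and hm: "home (grun A (Ip 0) t1)"
    and ab: "a < 2" "b < 2" "a \<noteq> b"
    and acta: "active (fst (grun A (Ip 0) t1) a)" "actof A (Ip 0) (fst (grun A (Ip 0) t1)) (snd (grun A (Ip 0) t1)) a = Go p" "p < 3"
    and actb: "active (fst (grun A (Ip 0) t1) b)" "actof A (Ip 0) (fst (grun A (Ip 0) t1)) (snd (grun A (Ip 0) t1)) b = Go q" "q < 3"
  shows "\<exists>r<3. \<not> solved A (Ip r) (Fg A (Ip r))"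
proof -
  let ?C = "grun A (Ip 0) t1"
  have C: "\<And>r. grun A (Ip r) t1 = ?C" by (rule early) simp
  have mb: "pos (fst (grun A (Ip q) (Suc t1)) b) = nbp q 0 q \<and> alive (fst (grun A (Ip q) (Suc t1)) b) = (nbp q 0 q \<noteq> 3)"
    by (rule move_first[OF hm C ab(2) actb])
  then have bdead: "\<not> alive (fst (grun A (Ip q) (Suc t1)) b)" by (simp add: nbp_self)
  have bact: "active (fst (grun A (Ip q) t1) b)" using actb(1) C[of q] by simp
  have bok: "\<not> (alive (fst (grun A (Ip q) t) b) \<and> halted (fst (grun A (Ip q) t) b) \<noteq> None)" for t
    by (rule never_solved_agent[OF bact bdead])
  show ?thesis
  proof (cases "q = p")
    case True
    have ma: "pos (fst (grun A (Ip q) (Suc t1)) a) = nbp q 0 p \<and> alive (fst (grun A (Ip q) (Suc t1)) a) = (nbp q 0 p \<noteq> 3)"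
      by (rule move_first[OF hm C ab(1) acta])
    then have adead: "\<not> alive (fst (grun A (Ip q) (Suc t1)) a)" using True by (simp add: nbp_self)
    have aact: "active (fst (grun A (Ip q) t1) a)" using acta(1) C[of q] by simp
    have aok: "\<not> (alive (fst (grun A (Ip q) t) a) \<and> halted (fst (grun A (Ip q) t) a) \<noteq> None)" for t
      by (rule never_solved_agent[OF aact adead])
    have "\<not> solved A (Ip q) (Fg A (Ip q))"
    proof (rule not_solved_by[OF actb(3)])
      fix t i assume "i < 2" "alive (fst (grun A (Ip q) t) i)" "halted (fst (grun A (Ip q) t) i) = Some q"
      moreover have "i = a \<or> i = b" using \<open>i < 2\<close> ab by auto
      ultimately show False using aok[of t] bok[of t] by auto
    qed
    then show ?thesis using actb(3) by blast
  next
    case False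
    have ma: "pos (fst (grun A (Ip q) (Suc t1)) a) = nbp q 0 p \<and> alive (fst (grun A (Ip q) (Suc t1)) a) = (nbp q 0 p \<noteq> 3)"
      by (rule move_first[OF hm C ab(1) acta])
    have x: "nbp q 0 p = 1 \<or> nbp q 0 p = 2" using nbp_tri[OF acta(3) actb(3)] False by auto
    have aal: "alive (fst (grun A (Ip q) (Suc t1)) a)" using ma x by auto
    have bnot: "\<forall>s\<ge>Suc t1. \<not> (active (fst (grun A (Ip q) s) b) \<and> (pos (fst (grun A (Ip q) s) b) = 1 \<or> pos (fst (grun A (Ip q) s) b) = 2))"
    proof (intro allI impI)
      fix s assume "Suc t1 \<le> s"
      then obtain d where d: "s = Suc t1 + d" using le_Suc_ex by blast
      have "\<not> alive (fst (grun A (Ip q) s) b)" unfolding d by (rule dead_persist[OF bdead])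
      then show "\<not> (active (fst (grun A (Ip q) s) b) \<and> (pos (fst (grun A (Ip q) s) b) = 1 \<or> pos (fst (grun A (Ip q) s) b) = 2))"
        by (simp add: active_def)
    qed
    have gh: "alive (fst (grun A (Ip q) (Suc t1 + d)) a) \<and> pos (fst (grun A (Ip q) (Suc t1 + d)) a) = nbp q 0 p" for d
      by (rule ghost_forever[OF ab aal _ x bnot]) (use ma in simp)
    have aact: "active (fst (grun A (Ip q) t1) a)" using acta(1) C[of q] by simp
    have "\<not> solved A (Ip q) (Fg A (Ip q))"
    proof (rule not_solved_by[OF actb(3)])
      fix t i assume i: "i < 2" "alive (fst (grun A (Ip q) t) i)" "pos (fst (grun A (Ip q) t) i) = 0"
        "halted (fst (grun A (Ip q) t) i) = Some q"
      have "i = a \<or> i = b" using \<open>i < 2\<close> ab by auto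
      then show False
      proof
        assume ia: "i = a"
        show False
        proof (cases "t \<le> t1")
          case True then show False using active_before[OF aact True] i(4) ia by simp
        next
          case False
          then obtain d where d: "t = Suc t1 + d" using le_Suc_ex[of "Suc t1" t] by auto
          have "pos (fst (grun A (Ip q) t) a) = nbp q 0 p" unfolding d using gh[of d] by blast
          then show False using i(3) ia x by auto
        qed
      next
        assume "i = b" then show False using bok[of t] i by auto
      qed
    qed
    then show ?thesis using actb(3) by blast
  qed
qed


lemma caseB3:
  assumes early: "\<And>r t. t \<le> t1 \<Longrightarrow> grun A (Ip r) t = grun A (Ip 0) t" and hm: "home (grun A (Ip 0) t1)"
    and ab: "a < 2" "b < 2" "a \<noteq> b"
    and acta: "active (fst (grun A (Ip 0) t1) a)" "actof A (Ip 0) (fst (grun A (Ip 0) t1)) (snd (grun A (Ip 0) t1)) a = Go p" "p < 3"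
    and nb: "active (fst (grun A (Ip 0) t1) b) \<longrightarrow> (\<forall>j<3. actof A (Ip 0) (fst (grun A (Ip 0) t1)) (snd (grun A (Ip 0) t1)) b \<noteq> Go j)"
  shows "\<exists>r<3. \<not> solved A (Ip r) (Fg A (Ip r))"
proof -
  let ?C = "grun A (Ip 0) t1"
  have C: "\<And>r. grun A (Ip r) t1 = ?C" by (rule early) simp
  have ab2: "\<And>i. i < 2 \<Longrightarrow> i = a \<or> i = b" using ab by auto
  have aact: "\<And>r. active (fst (grun A (Ip r) t1) a)" using acta(1) C by metis
  have ma: "\<And>r. pos (fst (grun A (Ip r) (Suc t1)) a) = nbp r 0 p \<and> alive (fst (grun A (Ip r) (Suc t1)) a) = (nbp r 0 p \<noteq> 3)"
    by (rule move_first[OF hm C ab(1) acta])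
  have adeadp: "\<not> alive (fst (grun A (Ip p) (Suc t1)) a)" using ma[of p] by (simp add: nbp_self)
  have bh0: "pos (fst ?C b) = 0" "alive (fst ?C b)" using hm ab(2) by (auto simp: home_def)
  have bsync1: "fst (grun A (Ip r) (Suc t1)) b = fst (grun A (Ip 0) (Suc t1)) b \<and>
      pos (fst (grun A (Ip r) (Suc t1)) b) = 0 \<and> alive (fst (grun A (Ip r) (Suc t1)) b)" for r
  proof -
    have g: "grun A (Ip r) (Suc t1) = step A (Ip r) (blk A (Ip r) ?C) ?C" using C[of r] by simp
    have g0: "grun A (Ip 0) (Suc t1) = step A (Ip 0) (blk A (Ip 0) ?C) ?C" by simp
    have nbr: "active (fst ?C b) \<longrightarrow> (\<forall>j<3. actof A (Ip r) (fst ?C) (snd ?C) b \<noteq> Go j)"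
      using nb actof_indep[of A r _ _ _ 0] by simp
    have X: "fst (step A (Ip r) (blk A (Ip r) ?C) ?C) b = fst (step A (Ip 0) (blk A (Ip 0) ?C) ?C) b \<and>
        pos (fst (step A (Ip r) (blk A (Ip r) ?C) ?C) b) = 0 \<and>
        alive (fst (step A (Ip r) (blk A (Ip r) ?C) ?C) b) = alive (fst ?C b)"
      by (rule agent_sync[OF ab(2) refl bh0(1) lr_indep nbr])
    show ?thesis unfolding g g0 using X bh0(2) by blast
  qed
  have wb1: "snd (grun A (Ip r) (Suc t1)) 0 = snd (grun A (Ip 0) (Suc t1)) 0" for r
  proof -
    have g: "grun A (Ip r) (Suc t1) = step A (Ip r) (blk A (Ip r) ?C) ?C" using C[of r] by simp
    show ?thesis unfolding g by (simp add: step_snd lr_indep[of A r _ _ _ 0])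
  qed
  define NGb where "NGb t \<longleftrightarrow> (active (fst (grun A (Ip p) t) b) \<longrightarrow>
      (\<forall>j<3. actof A (Ip p) (fst (grun A (Ip p) t)) (snd (grun A (Ip p) t)) b \<noteq> Go j))" for t
  define Inv where "Inv q t \<longleftrightarrow> fst (grun A (Ip p) t) b = fst (grun A (Ip q) t) b \<and>
      pos (fst (grun A (Ip p) t) b) = 0 \<and> alive (fst (grun A (Ip p) t) b) \<and>
      snd (grun A (Ip p) t) 0 = snd (grun A (Ip q) t) 0 \<and> \<not> alive (fst (grun A (Ip p) t) a) \<and>
      alive (fst (grun A (Ip q) t) a) \<and> pos (fst (grun A (Ip q) t) a) = nbp q 0 p" for q t
  have xq: "nbp q 0 p = 1 \<or> nbp q 0 p = 2" if "q < 3" "q \<noteq> p" for q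
    using nbp_tri[OF acta(3) that(1)] that(2) by auto
  have inv0: "Inv q (Suc t1)" if "q < 3" "q \<noteq> p" for q
  proof -
    have "alive (fst (grun A (Ip q) (Suc t1)) a)" "pos (fst (grun A (Ip q) (Suc t1)) a) = nbp q 0 p"
      using ma[of q] xq[OF that] by auto
    moreover have P: "fst (grun A (Ip p) (Suc t1)) b = fst (grun A (Ip 0) (Suc t1)) b"
        "pos (fst (grun A (Ip p) (Suc t1)) b) = 0" "alive (fst (grun A (Ip p) (Suc t1)) b)"
      using bsync1[of p] by blast+
    moreover have Q: "fst (grun A (Ip q) (Suc t1)) b = fst (grun A (Ip 0) (Suc t1)) b"
      using bsync1[of q] by blast
    moreover have "snd (grun A (Ip p) (Suc t1)) 0 = snd (grun A (Ip q) (Suc t1)) 0"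
      using wb1[of p] wb1[of q] by (rule trans[OF _ sym])
    moreover have "fst (grun A (Ip p) (Suc t1)) b = fst (grun A (Ip q) (Suc t1)) b"
      using P(1) Q by (rule trans[OF _ sym])
    ultimately show ?thesis unfolding Inv_def using adeadp by blast
  qed
  have lr0: "local_round A (Ip p) (fst (grun A (Ip p) t)) (snd (grun A (Ip p) t)) 0 =
             local_round A (Ip q) (fst (grun A (Ip q) t)) (snd (grun A (Ip q) t)) 0"
    if I: "Inv q t" and q: "q < 3" "q \<noteq> p" for q t
  proof (rule lr_cong)
    show "ids (Ip p) = ids (Ip q)" "k (Ip p) = k (Ip q)" "dg (Ip p) 0 = dg (Ip q) 0" by simp_all
    show "snd (grun A (Ip p) t) 0 = snd (grun A (Ip q) t) 0" using I unfolding Inv_def by blast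
    show "\<forall>i<k (Ip p). (alive (fst (grun A (Ip p) t) i) \<and> pos (fst (grun A (Ip p) t) i) = 0) =
                        (alive (fst (grun A (Ip q) t) i) \<and> pos (fst (grun A (Ip q) t) i) = 0)"
    proof (intro allI impI)
      fix i assume "i < k (Ip p)"
      then have "i = a \<or> i = b" using ab2 by simp
      then show "(alive (fst (grun A (Ip p) t) i) \<and> pos (fst (grun A (Ip p) t) i) = 0) =
                 (alive (fst (grun A (Ip q) t) i) \<and> pos (fst (grun A (Ip q) t) i) = 0)"
        using I xq[OF q] unfolding Inv_def by auto
    qed
    show "\<forall>i<k (Ip p). alive (fst (grun A (Ip p) t) i) \<and> pos (fst (grun A (Ip p) t) i) = 0 \<longrightarrow>
                        fst (grun A (Ip p) t) i = fst (grun A (Ip q) t) i"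
    proof (intro allI impI)
      fix i assume "i < k (Ip p)" "alive (fst (grun A (Ip p) t) i) \<and> pos (fst (grun A (Ip p) t) i) = 0"
      moreover have "i = a \<or> i = b" using ab2 \<open>i < k (Ip p)\<close> by simp
      ultimately show "fst (grun A (Ip p) t) i = fst (grun A (Ip q) t) i" using I unfolding Inv_def by auto
    qed
  qed
  have inv_step: "Inv q (Suc t)" if I: "Inv q t" and ng: "NGb t" and q: "q < 3" "q \<noteq> p" for q t
  proof -
    have L: "local_round A (Ip p) (fst (grun A (Ip p) t)) (snd (grun A (Ip p) t)) 0 =
             local_round A (Ip q) (fst (grun A (Ip q) t)) (snd (grun A (Ip q) t)) 0" by (rule lr0[OF I q])
    have I': "fst (grun A (Ip p) t) b = fst (grun A (Ip q) t) b" "pos (fst (grun A (Ip p) t) b) = 0"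
      "alive (fst (grun A (Ip p) t) b)" "\<not> alive (fst (grun A (Ip p) t) a)"
      "alive (fst (grun A (Ip q) t) a)" "pos (fst (grun A (Ip q) t) a) = nbp q 0 p"
      using I unfolding Inv_def by auto
    have X: "fst (step A (Ip p) (blk A (Ip p) (grun A (Ip p) t)) (grun A (Ip p) t)) b =
             fst (step A (Ip q) (blk A (Ip q) (grun A (Ip q) t)) (grun A (Ip q) t)) b \<and>
             pos (fst (step A (Ip p) (blk A (Ip p) (grun A (Ip p) t)) (grun A (Ip p) t)) b) = 0 \<and>
             alive (fst (step A (Ip p) (blk A (Ip p) (grun A (Ip p) t)) (grun A (Ip p) t)) b) = alive (fst (grun A (Ip p) t) b)"
      by (rule agent_sync[OF ab(2) I'(1) I'(2) L]) (use ng in \<open>simp add: NGb_def\<close>)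
    have bq: "\<not> (active (fst (grun A (Ip q) t) b) \<and> (pos (fst (grun A (Ip q) t) b) = 1 \<or> pos (fst (grun A (Ip q) t) b) = 2))"
      using I'(1,2) by simp
    have G: "alive (fst (step A (Ip q) (blk A (Ip q) (grun A (Ip q) t)) (grun A (Ip q) t)) a) \<and>
             pos (fst (step A (Ip q) (blk A (Ip q) (grun A (Ip q) t)) (grun A (Ip q) t)) a) = nbp q 0 p"
      by (rule ghost_step[OF ab I'(5) I'(6) xq[OF q] bq])
    have D: "\<not> alive (fst (grun A (Ip p) (Suc t)) a)" by (rule dead_persist1[OF I'(4)])
    have W: "snd (grun A (Ip p) (Suc t)) 0 = snd (grun A (Ip q) (Suc t)) 0"
      by (simp add: step_snd L)
    show ?thesis unfolding Inv_def using X[folded grun.simps(2)] G[folded grun.simps(2)] D W I'(3) by blast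
  qed
  have inv_range: "Inv q t" if q: "q < 3" "q \<noteq> p" and le: "Suc t1 \<le> t"
      and ngs: "\<forall>s. Suc t1 \<le> s \<and> s < t \<longrightarrow> NGb s" for q t
    using le
  proof (induct t rule: dec_induct)
    case base then show ?case by (rule inv0[OF q])
  next
    case (step n)
    then show ?case using inv_step[OF _ _ q] ngs by blast
  qed
  define q0 where "q0 = (if p = 0 then 1 else (0::nat))"
  have q0: "q0 < 3" "q0 \<noteq> p" unfolding q0_def by auto
  show ?thesis
  proof (cases "\<forall>s. Suc t1 \<le> s \<longrightarrow> NGb s")
    case True
    have I: "Inv q0 t" if "Suc t1 \<le> t" for t using inv_range[OF q0 that] True by blast
    have brec: "fst (grun A (Ip p) t) b = fst (grun A (Ip q0) t) b" for t
    proof (cases "t \<le> t1")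
      case True then show ?thesis using early[OF True, of p] early[OF True, of q0] by simp
    next
      case False then show ?thesis using I[of t] unfolding Inv_def by simp
    qed
    show ?thesis
    proof (rule ccontr)
      assume "\<not> (\<exists>r<3. \<not> solved A (Ip r) (Fg A (Ip r)))"
      then have Sp: "solved A (Ip p) (Fg A (Ip p))" and Sq: "solved A (Ip q0) (Fg A (Ip q0))"
        using acta(3) q0(1) by auto
      obtain t i where h: "i < 2" "alive (fst (grun A (Ip p) t) i)" "pos (fst (grun A (Ip p) t) i) = 0"
        "halted (fst (grun A (Ip p) t) i) = Some p" using solved_char[OF acta(3) Sp] by blast
      have "i \<noteq> a"
      proof
        assume ia: "i = a"
        show False
        proof (cases "t \<le> t1")
          case True then show False using active_before[OF aact True] h(4) ia by simp
        next
          case False then show False using I[of t] h(2) ia unfolding Inv_def by simp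
        qed
      qed
      then have "i = b" using ab2[OF h(1)] by simp
      then have hb: "halted (fst (grun A (Ip q0) t) b) = Some p" using h(4) brec[of t] by simp
      obtain t' i' where h': "i' < 2" "alive (fst (grun A (Ip q0) t') i')" "pos (fst (grun A (Ip q0) t') i') = 0"
        "halted (fst (grun A (Ip q0) t') i') = Some q0" using solved_char[OF q0(1) Sq] by blast
      have "i' \<noteq> a"
      proof
        assume ia: "i' = a"
        show False
        proof (cases "t' \<le> t1")
          case True then show False using active_before[OF aact True] h'(4) ia by simp
        next
          case False then show False using I[of t'] h'(3) ia xq[OF q0] unfolding Inv_def by auto
        qed
      qed
      then have "i' = b" using ab2[OF h'(1)] by simp
      then have "halted (fst (grun A (Ip q0) t') b) = Some q0" using h'(4) by simp
      then have "p = q0" using halted_uniq[OF hb] by simp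
      then show False using q0(2) by simp
    qed
  next
    case False
    then have ex: "\<exists>s. Suc t1 \<le> s \<and> \<not> NGb s" by blast
    define t2 where "t2 = (LEAST s. Suc t1 \<le> s \<and> \<not> NGb s)"
    have t2: "Suc t1 \<le> t2" "\<not> NGb t2" using LeastI_ex[OF ex] unfolding t2_def by auto
    have before: "\<forall>s. Suc t1 \<le> s \<and> s < t2 \<longrightarrow> NGb s"
      using not_less_Least[of _ "\<lambda>s. Suc t1 \<le> s \<and> \<not> NGb s"] unfolding t2_def by blast
    have Iq: "Inv q t2" if "q < 3" "q \<noteq> p" for q using inv_range[OF that t2(1) before] .
    obtain q' where bact2: "active (fst (grun A (Ip p) t2) b)" and q': "q' < 3"
      "actof A (Ip p) (fst (grun A (Ip p) t2)) (snd (grun A (Ip p) t2)) b = Go q'"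
      using t2(2) unfolding NGb_def by auto
    have bpos: "pos (fst (grun A (Ip p) t2) b) = 0" using Iq[OF q0] unfolding Inv_def by blast
    show ?thesis
    proof (cases "q' = p")
      case True
      have mv: "pos (fst (grun A (Ip p) (Suc t2)) b) = nbp p 0 p \<and> alive (fst (grun A (Ip p) (Suc t2)) b) = (nbp p 0 p \<noteq> 3)"
        using step_go[of b "Ip p" "grun A (Ip p) t2" A p "blk A (Ip p) (grun A (Ip p) t2)"]
          ab(2) bact2 q'(2) True bpos blk_no03[OF acta(3)] acta(3) by (simp add: dgf0 nbp_self)
      then have bdead: "\<not> alive (fst (grun A (Ip p) (Suc t2)) b)" by (simp add: nbp_self)
      have "\<not> solved A (Ip p) (Fg A (Ip p))"
      proof (rule not_solved_by[OF acta(3)])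
        fix t i assume i: "i < 2" "alive (fst (grun A (Ip p) t) i)" "pos (fst (grun A (Ip p) t) i) = 0"
          "halted (fst (grun A (Ip p) t) i) = Some p"
        show False
        proof (cases "i = a")
          case True then show False using never_solved_agent[OF aact adeadp, of t] i by simp
        next
          case False then have "i = b" using ab2[OF i(1)] by simp
          then show False using never_solved_agent[OF bact2 bdead, of t] i by simp
        qed
      qed
      then show ?thesis using acta(3) by blast
    next
      case False
      have q'p: "q' \<noteq> p" using False .
      have I2: "Inv q' t2" by (rule Iq[OF q'(1) q'p])
      have L: "local_round A (Ip p) (fst (grun A (Ip p) t2)) (snd (grun A (Ip p) t2)) 0 =
               local_round A (Ip q') (fst (grun A (Ip q') t2)) (snd (grun A (Ip q') t2)) 0"
        by (rule lr0[OF I2 q'(1) q'p])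
      have rec: "fst (grun A (Ip p) t2) b = fst (grun A (Ip q') t2) b" using I2 unfolding Inv_def by simp
      have bact3: "active (fst (grun A (Ip q') t2) b)" using bact2 rec by simp
      have bpos3: "pos (fst (grun A (Ip q') t2) b) = 0" using bpos rec by simp
      have act3: "actof A (Ip q') (fst (grun A (Ip q') t2)) (snd (grun A (Ip q') t2)) b = Go q'"
        using q'(2) L bpos bpos3 unfolding actof_def by simp
      have mv: "pos (fst (grun A (Ip q') (Suc t2)) b) = nbp q' 0 q' \<and> alive (fst (grun A (Ip q') (Suc t2)) b) = (nbp q' 0 q' \<noteq> 3)"
        using step_go[of b "Ip q'" "grun A (Ip q') t2" A q' "blk A (Ip q') (grun A (Ip q') t2)"]
          ab(2) bact3 act3 q'(1) bpos3 blk_no03[OF q'(1)] by (simp add: dgf0 nbp_self)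
      then have bdead: "\<not> alive (fst (grun A (Ip q') (Suc t2)) b)" by (simp add: nbp_self)
      have bnot: "\<forall>s\<ge>Suc t1. \<not> (active (fst (grun A (Ip q') s) b) \<and> (pos (fst (grun A (Ip q') s) b) = 1 \<or> pos (fst (grun A (Ip q') s) b) = 2))"
      proof (intro allI impI)
        fix s assume s: "Suc t1 \<le> s"
        show "\<not> (active (fst (grun A (Ip q') s) b) \<and> (pos (fst (grun A (Ip q') s) b) = 1 \<or> pos (fst (grun A (Ip q') s) b) = 2))"
        proof (cases "s \<le> t2")
          case True
          have "Inv q' s" using inv_range[OF q'(1) q'p s] before True by auto
          then have "pos (fst (grun A (Ip q') s) b) = 0" unfolding Inv_def by metis
          then show ?thesis by simp
        next
          case False
          then obtain d where d: "s = Suc t2 + d" using le_Suc_ex[of "Suc t2" s] by auto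
          have "\<not> alive (fst (grun A (Ip q') s) b)" unfolding d by (rule dead_persist[OF bdead])
          then show ?thesis by (simp add: active_def)
        qed
      qed
      have I1: "Inv q' (Suc t1)" by (rule inv0[OF q'(1) q'p])
      have aal: "alive (fst (grun A (Ip q') (Suc t1)) a)" "pos (fst (grun A (Ip q') (Suc t1)) a) = nbp q' 0 p"
        using I1 unfolding Inv_def by auto
      have gh: "alive (fst (grun A (Ip q') (Suc t1 + d)) a) \<and> pos (fst (grun A (Ip q') (Suc t1 + d)) a) = nbp q' 0 p" for d
        by (rule ghost_forever[OF ab aal xq[OF q'(1) q'p] bnot])
      have "\<not> solved A (Ip q') (Fg A (Ip q'))"
      proof (rule not_solved_by[OF q'(1)])
        fix t i assume i: "i < 2" "alive (fst (grun A (Ip q') t) i)" "pos (fst (grun A (Ip q') t) i) = 0"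
          "halted (fst (grun A (Ip q') t) i) = Some q'"
        show False
        proof (cases "i = a")
          case True
          show False
          proof (cases "t \<le> t1")
            case True then show False using active_before[OF aact True] i(4) \<open>i = a\<close> by simp
          next
            case False
            then obtain d where d: "t = Suc t1 + d" using le_Suc_ex[of "Suc t1" t] by auto
            have "pos (fst (grun A (Ip q') t) a) = nbp q' 0 p" unfolding d using gh[of d] by blast
            then show False using i(3) \<open>i = a\<close> xq[OF q'(1) q'p] by auto
          qed
        next
          case False then have "i = b" using ab2[OF i(1)] by simp
          then show False using never_solved_agent[OF bact3 bdead, of t] i by simp
        qed
      qed
      then show ?thesis using q'(1) by blast
    qed
  qed
qed


lemma main_ex: "\<exists>r<3. \<not> solved A (Ip r) (Fg A (Ip r))"
proof (cases "\<forall>s. NG A (grun A (Ip 0) s)")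
  case True then show ?thesis by (rule caseA)
next
  case False
  then have ex: "\<exists>s. \<not> NG A (grun A (Ip 0) s)" by blast
  define t1 where "t1 = (LEAST s. \<not> NG A (grun A (Ip 0) s))"
  have nt1: "\<not> NG A (grun A (Ip 0) t1)" using LeastI_ex[OF ex] unfolding t1_def .
  have bef: "\<forall>s<t1. NG A (grun A (Ip 0) s)" using not_less_Least unfolding t1_def by blast
  have early: "grun A (Ip r) t = grun A (Ip 0) t" if "t \<le> t1" for r t
  proof -
    have "\<forall>s<t. NG A (grun A (Ip 0) s)" using bef that by auto
    then show ?thesis using phase1 by blast
  qed
  have hm: "home (grun A (Ip 0) t1)" using phase1[of t1 A 0] bef by blast
  let ?C = "grun A (Ip 0) t1"
  obtain a p where a: "a < 2" "active (fst ?C a)" "p < 3" "actof A (Ip 0) (fst ?C) (snd ?C) a = Go p"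
    using nt1 unfolding NG_def by blast
  define b where "b = 1 - a"
  have ab: "a < 2" "b < 2" "a \<noteq> b" using a(1) unfolding b_def by arith+
  show ?thesis
  proof (cases "active (fst ?C b) \<and> (\<exists>q<3. actof A (Ip 0) (fst ?C) (snd ?C) b = Go q)")
    case True
    then obtain q where q: "active (fst ?C b)" "q < 3" "actof A (Ip 0) (fst ?C) (snd ?C) b = Go q" by blast
    show ?thesis by (rule caseB12[OF early hm ab a(2) a(4) a(3) q(1) q(3) q(2)])
  next
    case False
    then have nb: "active (fst ?C b) \<longrightarrow> (\<forall>j<3. actof A (Ip 0) (fst ?C) (snd ?C) b \<noteq> Go j)" by blast
    show ?thesis by (rule caseB3[OF early hm ab a(2) a(4) a(3) nb])
  qed
qed

theorem theorem3:
  fixes c :: real and A :: algo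
  assumes "c > 1" and "logmem c A"
  shows "\<exists>I F. valid_inst c I \<and> k I = 2 * dg I (bh I) \<and> adversary I F \<and> \<not> solved A I F"
proof -
  obtain r where r: "r < 3" "\<not> solved A (Ip r) (Fg A (Ip r))" using main_ex[of A] by blast
  have "valid_inst c (Ip r)" by (rule valid_inst_Ip[OF r(1) assms(1)])
  moreover have "k (Ip r) = 2 * dg (Ip r) (bh (Ip r))" by (simp add: dgf_def)
  moreover have "adversary (Ip r) (Fg A (Ip r))" by (rule adversary_Ip[OF r(1)])
  ultimately show ?thesis using r(2) by blast
qed


end
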